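(* Let $\phi_1,\phi_2,\phi_3\in\mathbb{R}$ satisfy $\phi_i-\phi_j\neq 2n\pi$ for all $i\neq j$ and all integers $n$, and fix $0<R<1$. For $A>0$ and $(b_1,b_2)\in\mathbb{R}^2$ with $b_1^2+b_2^2\le R$, define $$K(b_1,b_2;\phi)=\frac{1}{\left[(b_1-\cos\phi)^2+(b_2-\sin\phi)^2\right]^2}$$ and the data map $$\mathcal{A}(A,b_1,b_2)=\big(A\,K(b_1,b_2;\phi_1),\;A\,K(b_1,b_2;\phi_2),\;A\,K(b_1,b_2;\phi_3)\big).$$ Then the parameters $(A,b_1,b_2)$ (the area and center of the anomaly) are uniquely determined by the data $\mathcal{A}(A,b_1,b_2)$; that is, $\mathcal{A}$ is injective on $\{(A,b_1,b_2): A>0,\ b_1^2+b_2^2\le R\}$.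
   Context: Setting: a small (elliptical) conductivity anomaly of area $A$ centered at $(b_1,b_2)$ inside the unit disc, with small conductivity contrast against a constant background. Under linearization and to leading order in the anomaly size, the measurement (tangential derivative of the perturbation potential) produced by a boundary dipole placed at $(\cos\phi,\sin\phi)$ equals $A\,K(b_1,b_2;\phi)$, where $K(b_1,b_2;\phi)=|\nabla U_0(b_1,b_2)|^2$ with $U_0$ the dipole potential; measurements are taken at three angles $\phi_1,\phi_2,\phi_3$. *)

theory Defs
  imports Complex_Main
begin

definition Kfun :: "real \<Rightarrow> real \<Rightarrow> real \<Rightarrow> real" where
  "Kfun b1 b2 \<phi> = 1 / ((b1 - cos \<phi>)\<^sup>2 + (b2 - sin \<phi>)\<^sup>2)\<^sup>2"

definition data_map :: "real \<Rightarrow> real \<Rightarrow> real \<Rightarrow> real \<Rightarrow> real \<Rightarrow> real \<Rightarrow> real \<times> real \<times> real" where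
  "data_map \<phi>1 \<phi>2 \<phi>3 A b1 b2 = (A * Kfun b1 b2 \<phi>1, A * Kfun b1 b2 \<phi>2, A * Kfun b1 b2 \<phi>3)"

end

theory Submission
  imports Defs
begin

lemma line_circle:
  fixes x1 y1 x2 y2 x3 y3 w1 w2 t :: real
  assumes c1: "x1^2 + y1^2 = 1" and c2: "x2^2 + y2^2 = 1" and c3: "x3^2 + y3^2 = 1"
    and l1: "w1*x1 + w2*y1 = t" and l2: "w1*x2 + w2*y2 = t" and l3: "w1*x3 + w2*y3 = t"
    and d12: "(x1,y1) \<noteq> (x2,y2)" and d13: "(x1,y1) \<noteq> (x3,y3)" and d23: "(x2,y2) \<noteq> (x3,y3)"
  shows "w1 = 0 \<and> w2 = 0"
proof (rule ccontr)
  assume nz: "\<not> (w1 = 0 \<and> w2 = 0)"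
  hence N: "w1^2 + w2^2 > 0" by (simp add: sum_power2_gt_zero_iff)
  have key: "(w1*x + w2*y)^2 + (w1*y - w2*x)^2 = w1^2+w2^2" if "x^2+y^2=1" for x y :: real
  proof -
    have "(w1*x + w2*y)^2 + (w1*y - w2*x)^2 = (w1^2+w2^2)*(x^2+y^2)" by algebra
    thus ?thesis using that by simp
  qed
  have same: "(x,y) = (x',y')" if "w1*x + w2*y = w1*x' + w2*y'" "w1*y - w2*x = w1*y' - w2*x'" for x y x' y' :: real
  proof -
    have "(w1^2+w2^2) * (x - x') = 0"
    proof -
      have "(w1^2+w2^2) * (x - x') = w1*((w1*x + w2*y) - (w1*x' + w2*y')) - w2*((w1*y - w2*x) - (w1*y' - w2*x'))" by algebra
      thus ?thesis using that by simp
    qed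
    moreover have "(w1^2+w2^2) * (y - y') = 0"
    proof -
      have "(w1^2+w2^2) * (y - y') = w2*((w1*x + w2*y) - (w1*x' + w2*y')) + w1*((w1*y - w2*x) - (w1*y' - w2*x'))" by algebra
      thus ?thesis using that by simp
    qed
    ultimately show ?thesis using N by auto
  qed
  define L1 where "L1 = w1*y1 - w2*x1"
  define L2 where "L2 = w1*y2 - w2*x2"
  define L3 where "L3 = w1*y3 - w2*x3"
  have "L1^2 = L2^2" "L1^2 = L3^2"
    using key[OF c1] key[OF c2] key[OF c3] l1 l2 l3 unfolding L1_def L2_def L3_def by auto
  hence "L1 = L2 \<or> L1 = -L2" "L1 = L3 \<or> L1 = -L3" using power2_eq_iff[of L1 L2] power2_eq_iff[of L1 L3] by blast+
  hence "L1 = L2 \<or> L1 = L3 \<or> L2 = L3" by linarith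
  moreover have "L1 \<noteq> L2" using same[of x1 y1 x2 y2] l1 l2 d12 unfolding L1_def L2_def by auto
  moreover have "L1 \<noteq> L3" using same[of x1 y1 x3 y3] l1 l3 d13 unfolding L1_def L3_def by auto
  moreover have "L2 \<noteq> L3" using same[of x2 y2 x3 y3] l2 l3 d23 unfolding L2_def L3_def by auto
  ultimately show False by blast
qed

lemma distinct_pts:
  assumes "\<forall>n::int. a - b \<noteq> 2 * of_int n * pi"
  shows "(cos a, sin a) \<noteq> (cos b, sin b)"
proof
  assume "(cos a, sin a) = (cos b, sin b)"
  hence "cos (a - b) = 1" by (simp add: cos_diff)
  then obtain n :: int where "a - b = of_int n * 2 * pi" using cos_one_2pi_int by blast
  thus False using assms by (metis mult.commute mult.left_commute)
qed

lemma Dexp: "((b1::real) - cos p)^2 + (b2 - sin p)^2 = b1^2 + b2^2 + 1 - 2*(b1*cos p + b2*sin p)"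
proof -
  have "(b1 - cos p)^2 + (b2 - sin p)^2 = b1^2 + b2^2 + ((sin p)^2 + (cos p)^2) - 2*(b1*cos p + b2*sin p)"
    by (simp add: power2_diff algebra_simps)
  thus ?thesis by simp
qed

lemma Dpos:
  assumes "(b1::real)^2 + b2^2 < 1"
  shows "(b1 - cos p)^2 + (b2 - sin p)^2 > 0"
proof (rule ccontr)
  assume "\<not> ?thesis"
  moreover have "(b1 - cos p)^2 + (b2 - sin p)^2 \<ge> 0" by simp
  ultimately have "(b1 - cos p)^2 + (b2 - sin p)^2 = 0" by linarith
  hence "b1 = cos p" "b2 = sin p" by (simp_all add: sum_power2_eq_zero_iff)
  thus False using assms by simp
qed

theorem theorem1:
  fixes \<phi>1 \<phi>2 \<phi>3 R :: real
  assumes "\<forall>n::int. \<phi>1 - \<phi>2 \<noteq> 2 * of_int n * pi"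
      and "\<forall>n::int. \<phi>1 - \<phi>3 \<noteq> 2 * of_int n * pi"
      and "\<forall>n::int. \<phi>2 - \<phi>3 \<noteq> 2 * of_int n * pi"
      and "0 < R" and "R < 1"
  shows "inj_on (\<lambda>(A, b1, b2). data_map \<phi>1 \<phi>2 \<phi>3 A b1 b2)
           {(A, b1, b2). A > 0 \<and> b1\<^sup>2 + b2\<^sup>2 \<le> R}"
proof (rule inj_onI, clarsimp)
  fix A b1 b2 A' b1' b2' :: real
  assume A: "A > 0" and b: "b1^2 + b2^2 \<le> R" and A': "A' > 0" and b': "b1'^2 + b2'^2 \<le> R"
    and eq: "data_map \<phi>1 \<phi>2 \<phi>3 A b1 b2 = data_map \<phi>1 \<phi>2 \<phi>3 A' b1' b2'"
  define D where "D = (\<lambda>u v p::real. (u - cos p)^2 + (v - sin p)^2)"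
  have bl: "b1^2 + b2^2 < 1" "b1'^2 + b2'^2 < 1" using b b' assms(5) by auto
  have Dp: "D b1 b2 p > 0" "D b1' b2' p > 0" for p
    unfolding D_def using Dpos bl by auto
  have rel: "A * (D b1' b2' p)^2 = A' * (D b1 b2 p)^2"
    if "A * Kfun b1 b2 p = A' * Kfun b1' b2' p" for p
  proof -
    have "A / (D b1 b2 p)^2 = A' / (D b1' b2' p)^2" using that unfolding Kfun_def D_def by simp
    thus ?thesis using Dp[of p] by (simp add: field_simps)
  qed
  have r1: "A * (D b1' b2' \<phi>1)^2 = A' * (D b1 b2 \<phi>1)^2"
   and r2: "A * (D b1' b2' \<phi>2)^2 = A' * (D b1 b2 \<phi>2)^2"
   and r3: "A * (D b1' b2' \<phi>3)^2 = A' * (D b1 b2 \<phi>3)^2"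
    using eq rel unfolding data_map_def by auto
  define c where "c = D b1' b2' \<phi>1 / D b1 b2 \<phi>1"
  have cpos: "c > 0" unfolding c_def using Dp by simp
  have ratio: "D b1' b2' p = c * D b1 b2 p"
    if "A * (D b1' b2' p)^2 = A' * (D b1 b2 p)^2" for p
  proof -
    define e where "e = D b1' b2' p / D b1 b2 p"
    have epos: "e > 0" unfolding e_def using Dp by simp
    have "e^2 = (D b1' b2' p)^2 / (D b1 b2 p)^2" unfolding e_def by (simp add: power_divide)
    also have "\<dots> = A'/A" proof -
      have "(D b1 b2 p)^2 \<noteq> 0" "A \<noteq> 0" using Dp[of p] A by auto
      moreover have "(D b1' b2' p)^2 * A = A' * (D b1 b2 p)^2" using that by (simp add: algebra_simps)
      ultimately show ?thesis by (simp add: frac_eq_eq)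
    qed
    finally have "e^2 = A'/A" .
    moreover have "c^2 = A'/A"
    proof -
      have "c^2 = (D b1' b2' \<phi>1)^2 / (D b1 b2 \<phi>1)^2" unfolding c_def by (simp add: power_divide)
      also have "\<dots> = A'/A" proof -
        have "(D b1 b2 \<phi>1)^2 \<noteq> 0" "A \<noteq> 0" using Dp[of \<phi>1] A by auto
        moreover have "(D b1' b2' \<phi>1)^2 * A = A' * (D b1 b2 \<phi>1)^2" using r1 by (simp add: algebra_simps)
        ultimately show ?thesis by (simp add: frac_eq_eq)
      qed
      finally show ?thesis .
    qed
    ultimately have "e = c" using epos cpos by (metis power2_eq_iff_nonneg less_imp_le)
    thus ?thesis unfolding e_def using Dp[of p] by (simp add: field_simps)
  qed
  define t where "t = ((b1'^2 + b2'^2 + 1) - c*(b1^2+b2^2+1))/2"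
  have lin: "(b1' - c*b1)*cos p + (b2' - c*b2)*sin p = t"
    if "D b1' b2' p = c * D b1 b2 p" for p
  proof -
    from that have "b1'^2 + b2'^2 + 1 - 2*(b1'*cos p + b2'*sin p) = c*(b1^2 + b2^2 + 1 - 2*(b1*cos p + b2*sin p))"
      unfolding D_def Dexp .
    thus ?thesis unfolding t_def by (simp add: algebra_simps)
  qed
  have w: "b1' - c*b1 = 0 \<and> b2' - c*b2 = 0"
    by (rule line_circle[OF sin_cos_squared_add2 sin_cos_squared_add2 sin_cos_squared_add2
          lin[OF ratio[OF r1]] lin[OF ratio[OF r2]] lin[OF ratio[OF r3]]
          distinct_pts[OF assms(1)] distinct_pts[OF assms(2)] distinct_pts[OF assms(3)]])
  hence bb: "b1' = c*b1" "b2' = c*b2" by auto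
  have "t = (b1' - c*b1)*cos \<phi>1 + (b2' - c*b2)*sin \<phi>1" using lin[OF ratio[OF r1]] by simp
  also have "\<dots> = 0" using w by simp
  finally have "t = 0" .
  define r where "r = b1^2 + b2^2"
  have "b1'^2 + b2'^2 = (c*b1)^2 + (c*b2)^2" using bb by simp
  also have "\<dots> = c^2 * r" unfolding r_def by (simp add: power_mult_distrib distrib_left)
  finally have r'eq: "b1'^2 + b2'^2 = c^2 * r" .
  have "c^2 * r + 1 = c*(r+1)" using \<open>t = 0\<close> r'eq unfolding t_def r_def by simp
  hence "(c - 1) * (c*r - 1) = 0" by (simp add: algebra_simps power2_eq_square)
  moreover have "c*r \<noteq> 1"
  proof
    assume cr: "c*r = 1"
    have "r < 1" using bl unfolding r_def by simp
    have "r \<ge> 0" unfolding r_def by simp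
    have "c * r < c" using \<open>r < 1\<close> cpos by simp
    hence "c > 1" using cr by simp
    have "b1'^2 + b2'^2 = c" using r'eq cr by (simp add: power2_eq_square)
    thus False using bl \<open>c > 1\<close> by simp
  qed
  ultimately have "c = 1" by simp
  with bb have "b1' = b1" "b2' = b2" by auto
  moreover have "A' = A"
  proof -
    have "A * (D b1 b2 \<phi>1)^2 = A' * (D b1 b2 \<phi>1)^2" using r1 \<open>b1' = b1\<close> \<open>b2' = b2\<close> by simp
    thus ?thesis using Dp[of \<phi>1] by simp
  qed
  ultimately show "A = A' \<and> b1 = b1' \<and> b2 = b2'" by simp
qed

end
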